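(* Let $X,Y,Z$ be random variables on finite alphabets $\mathcal{X},\mathcal{Y},\mathcal{Z}$, and let $\operatorname{Un}(X\to Z\mid Y)$ be the unique information defined below. Then $\operatorname{Un}(X\to Z\mid Y)\le I(X;Z)$.
   Context: For each $y\in\mathcal{Y}$ with $\Pr(Y=y)>0$, let $(A_y,B_y,C_y)$ be the random triple on $\mathcal{X}\times\mathcal{Y}\times\mathcal{Z}$ with $\Pr(A_y=x,B_y=y',C_y=z)=0$ if $\Pr(Z=z)=0$ and $\Pr(A_y=x,B_y=y',C_y=z)=\Pr(X=x,Y=y',Z=z)\Pr(Z=z\mid Y=y)/\Pr(Z=z)$ otherwise. The unique information is $\operatorname{Un}(X\to Z\mid Y)=\sum_{y:\Pr(Y=y)>0}\Pr(Y=y)\,I(A_y;C_y)$, where $I$ is mutual information. *)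

theory Defs
  imports "HOL-Probability.Probability_Mass_Function"
begin

definition mutual_info :: "('a::finite \<times> 'b::finite \<Rightarrow> real) \<Rightarrow> real" where
  "mutual_info f =
     (\<Sum>a\<in>UNIV. \<Sum>b\<in>UNIV. if f (a, b) = 0 then 0
                  else f (a, b) * log (2::real) (f (a, b) / ((\<Sum>b'\<in>UNIV. f (a, b')) * (\<Sum>a'\<in>UNIV. f (a', b)))))"

definition PY :: "('x::finite \<times> 'y::finite \<times> 'z::finite) pmf \<Rightarrow> 'y \<Rightarrow> real" where
  "PY p y = (\<Sum>x\<in>UNIV. \<Sum>z\<in>UNIV. pmf p (x, y, z))"

definition PZ :: "('x::finite \<times> 'y::finite \<times> 'z::finite) pmf \<Rightarrow> 'z \<Rightarrow> real" where
  "PZ p z = (\<Sum>x\<in>UNIV. \<Sum>y\<in>UNIV. pmf p (x, y, z))"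

definition PYZ :: "('x::finite \<times> 'y::finite \<times> 'z::finite) pmf \<Rightarrow> 'y \<Rightarrow> 'z \<Rightarrow> real" where
  "PYZ p y z = (\<Sum>x\<in>UNIV. pmf p (x, y, z))"

definition PXZ :: "('x::finite \<times> 'y::finite \<times> 'z::finite) pmf \<Rightarrow> 'x \<times> 'z \<Rightarrow> real" where
  "PXZ p xz = (\<Sum>y\<in>UNIV. pmf p (fst xz, y, snd xz))"

definition tilt :: "('x::finite \<times> 'y::finite \<times> 'z::finite) pmf \<Rightarrow> 'y \<Rightarrow> 'x \<times> 'y \<times> 'z \<Rightarrow> real" where
  "tilt p y t = (case t of (x, y', z) \<Rightarrow>
      if PZ p z = 0 then 0
      else pmf p (x, y', z) * (PYZ p y z / PY p y) / PZ p z)"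

definition unique_info :: "('x::finite \<times> 'y::finite \<times> 'z::finite) pmf \<Rightarrow> real" where
  "unique_info p =
     (\<Sum>y\<in>{y. PY p y > 0}. PY p y * mutual_info (\<lambda>(x, z). \<Sum>y'\<in>UNIV. tilt p y (x, y', z)))"

end

theory Submission
  imports Defs
begin

lemma tot: fixes p :: "('x::finite \<times> 'y::finite \<times> 'z::finite) pmf"
  shows "(\<Sum>y\<in>UNIV. PY p y) = 1"
proof -
  have "(\<Sum>x\<in>UNIV. \<Sum>y\<in>UNIV. \<Sum>z\<in>UNIV. pmf p (x, y, z)) = (\<Sum>x\<in>UNIV. \<Sum>yz\<in>UNIV\<times>UNIV. pmf p (x, yz))"
    by (subst sum.cartesian_product) (simp add: case_prod_beta)
  also have "\<dots> = (\<Sum>xyz\<in>UNIV\<times>(UNIV\<times>UNIV). pmf p xyz)"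
    by (subst sum.cartesian_product) (simp add: case_prod_beta)
  also have "\<dots> = 1" by (rule sum_pmf_eq_1) auto
  finally have 1: "(\<Sum>x\<in>UNIV. \<Sum>y\<in>UNIV. \<Sum>z\<in>UNIV. pmf p (x, y, z)) = 1" .
  have "(\<Sum>y\<in>UNIV. PY p y) = (\<Sum>x\<in>UNIV. \<Sum>y\<in>UNIV. \<Sum>z\<in>UNIV. pmf p (x, y, z))" unfolding PY_def by (rule sum.swap)
  with 1 show ?thesis by simp
qed

lemma PZ_PXZ: "PZ p z = (\<Sum>x\<in>UNIV. PXZ p (x, z))"
  unfolding PZ_def PXZ_def by simp

lemma PZ_PYZ: "PZ p z = (\<Sum>y\<in>UNIV. PYZ p y z)"
  unfolding PZ_def PYZ_def by (rule sum.swap)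

lemma PY_PYZ: "PY p y = (\<Sum>z\<in>UNIV. PYZ p y z)"
  unfolding PY_def PYZ_def by (rule sum.swap)

lemma PXZ_nn: "PXZ p xz \<ge> 0" unfolding PXZ_def by (simp add: sum_nonneg)
lemma PYZ_nn: "PYZ p y z \<ge> 0" unfolding PYZ_def by (simp add: sum_nonneg)
lemma PY_nn: "PY p y \<ge> 0" unfolding PY_def by (simp add: sum_nonneg)
lemma PZ_nn: "PZ p z \<ge> 0" unfolding PZ_def by (simp add: sum_nonneg)

lemma PXZ_le: "PXZ p (x, z) \<le> PZ p z"
  unfolding PZ_PXZ by (rule member_le_sum) (auto simp: PXZ_nn)
lemma PYZ_le_Z: "PYZ p y z \<le> PZ p z"
  unfolding PZ_PYZ by (rule member_le_sum) (auto simp: PYZ_nn)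
lemma PYZ_le_Y: "PYZ p y z \<le> PY p y"
  unfolding PY_PYZ by (rule member_le_sum) (auto simp: PYZ_nn)

lemma Q_eq: "(\<Sum>y'\<in>UNIV. tilt p y (x, y', z)) = PXZ p (x, z) / PZ p z * (PYZ p y z / PY p y)"
proof (cases "PZ p z = 0")
  case True then show ?thesis by (simp add: tilt_def)
next
  case False
  have "(\<Sum>y'\<in>UNIV. tilt p y (x, y', z)) = (\<Sum>y'\<in>UNIV. pmf p (x, y', z) * (PYZ p y z / PY p y) / PZ p z)"
    using False by (simp add: tilt_def)
  also have "\<dots> = (\<Sum>y'\<in>UNIV. pmf p (x, y', z)) * (PYZ p y z / PY p y) / PZ p z"
    by (simp add: sum_divide_distrib sum_distrib_right)
  also have "\<dots> = PXZ p (x, z) / PZ p z * (PYZ p y z / PY p y)"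
    by (simp add: PXZ_def)
  finally show ?thesis .
qed

lemma log_bound:
  assumes "t > 0" shows "log 2 t \<le> (t - 1) / ln 2"
proof -
  have "ln t \<le> t - 1" using assms by (rule ln_le_minus_one)
  then show ?thesis by (simp add: log_def divide_right_mono)
qed

theorem lemma4:
  fixes p :: "('x::finite \<times> 'y::finite \<times> 'z::finite) pmf"
  shows "unique_info p \<le> mutual_info (PXZ p)"
proof -
  define W where "W x z = PXZ p (x, z) / PZ p z" for x z
  define c where "c y z = PYZ p y z / PY p y" for y z
  define Q where "Q y = (\<lambda>(x, z). \<Sum>y'\<in>UNIV. tilt p y (x, y', z))" for y
  define PX where "PX x = (\<Sum>z\<in>UNIV. PXZ p (x, z))" for x
  define QX where "QX y x = (\<Sum>z\<in>UNIV. W x z * c y z)" for y x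
  define g where "g x z = (if PXZ p (x, z) = 0 then 0 else log 2 (W x z / PX x))" for x z
  have Qe: "Q y (x, z) = W x z * c y z" for y x z
    unfolding Q_def W_def c_def by (simp add: Q_eq)
  have Wnn: "W x z \<ge> 0" for x z unfolding W_def by (simp add: PXZ_nn PZ_nn)
  have cnn: "c y z \<ge> 0" for y z unfolding c_def by (simp add: PYZ_nn PY_nn)
  have Qnn: "Q y (x, z) \<ge> 0" for y x z using Qe Wnn cnn by simp
  have QXnn: "QX y x \<ge> 0" for y x unfolding QX_def using Wnn cnn by (simp add: sum_nonneg)
  have PXnn: "PX x \<ge> 0" for x unfolding PX_def by (simp add: sum_nonneg PXZ_nn)
  have QZ: "(\<Sum>x\<in>UNIV. Q y (x, z)) = c y z" for y z
  proof (cases "PZ p z = 0")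
    case True
    then have "PYZ p y z = 0" using PYZ_le_Z[of p y z] PYZ_nn[of p y z] by simp
    then show ?thesis using True by (simp add: Qe W_def c_def)
  next
    case False
    have "(\<Sum>x\<in>UNIV. Q y (x, z)) = (\<Sum>x\<in>UNIV. PXZ p (x, z)) / PZ p z * c y z"
      by (simp add: Qe W_def sum_distrib_right sum_divide_distrib)
    also have "\<dots> = c y z" using False by (simp add: PZ_PXZ[symmetric])
    finally show ?thesis .
  qed
  have ln2: "ln (2::real) > 0" by simp
  have T: "(if Q y (x, z) = 0 then 0 else Q y (x, z) * log 2 (Q y (x, z) / (QX y x * c y z)))
      \<le> Q y (x, z) * g x z + Q y (x, z) * (PX x / QX y x - 1) / ln 2" for y x z
  proof (cases "Q y (x, z) = 0")
    case True then show ?thesis by simp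
  next
    case False
    have Qp: "Q y (x, z) > 0" using False Qnn[of y x z] by simp
    have Wp: "W x z > 0" and cp: "c y z > 0" using False Wnn[of x z] cnn[of y z] Qe[of y x z]
      by (auto simp: less_le)
    have PZp: "PZ p z > 0" using Wp PZ_nn[of p z] unfolding W_def by (auto simp: less_le)
    have PXZp: "PXZ p (x, z) > 0" using Wp PZp PXZ_nn[of p "(x,z)"] unfolding W_def
      by (auto simp: less_le)
    have "PXZ p (x, z) \<le> PX x" unfolding PX_def by (rule member_le_sum) (auto simp: PXZ_nn)
    then have PXp: "PX x > 0" using PXZp by simp
    have "W x z * c y z \<le> QX y x" unfolding QX_def
      by (rule member_le_sum[where f="\<lambda>z. W x z * c y z"]) (auto intro: mult_nonneg_nonneg Wnn cnn)
    then have QXp: "QX y x > 0" using Wp cp by (smt (verit) mult_pos_pos)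
    have "Q y (x, z) / (QX y x * c y z) = W x z / QX y x" using cp by (simp add: Qe)
    also have "log 2 (W x z / QX y x) = log 2 (W x z / PX x) + log 2 (PX x / QX y x)"
      using Wp PXp QXp by (simp add: log_divide)
    finally have e: "log 2 (Q y (x, z) / (QX y x * c y z)) = g x z + log 2 (PX x / QX y x)"
      using PXZp by (simp add: g_def)
    have "log 2 (PX x / QX y x) \<le> (PX x / QX y x - 1) / ln 2"
      using PXp QXp by (intro log_bound) simp
    then have "Q y (x, z) * log 2 (PX x / QX y x) \<le> Q y (x, z) * ((PX x / QX y x - 1) / ln 2)"
      using Qp by (intro mult_left_mono) auto
    then show ?thesis using False e by (simp add: distrib_left)
  qed
  have B: "mutual_info (Q y) \<le> (\<Sum>x\<in>UNIV. \<Sum>z\<in>UNIV. Q y (x, z) * g x z) + (\<Sum>x\<in>UNIV. (PX x - QX y x) / ln 2)" for y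
  proof -
    have "mutual_info (Q y) = (\<Sum>x\<in>UNIV. \<Sum>z\<in>UNIV. (if Q y (x, z) = 0 then 0 else Q y (x, z) * log 2 (Q y (x, z) / (QX y x * c y z))))"
    proof -
      have QXe: "(\<Sum>b'\<in>UNIV. Q y (a, b')) = QX y a" for a by (simp add: QX_def Qe)
      show ?thesis unfolding mutual_info_def QZ QXe by (rule refl)
    qed
    also have "\<dots> \<le> (\<Sum>x\<in>UNIV. (\<Sum>z\<in>UNIV. Q y (x, z) * g x z) + (PX x - QX y x) / ln 2)"
    proof (rule sum_mono)
      fix x :: 'x
      have "(\<Sum>z\<in>UNIV. (if Q y (x, z) = 0 then 0 else Q y (x, z) * log 2 (Q y (x, z) / (QX y x * c y z))))
          \<le> (\<Sum>z\<in>UNIV. Q y (x, z) * g x z + Q y (x, z) * (PX x / QX y x - 1) / ln 2)"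
        by (rule sum_mono) (rule T)
      also have "\<dots> = (\<Sum>z\<in>UNIV. Q y (x, z) * g x z) + QX y x * (PX x / QX y x - 1) / ln 2"
        by (simp add: sum.distrib sum_divide_distrib[symmetric] sum_distrib_right[symmetric] QX_def Qe)
      also have "\<dots> \<le> (\<Sum>z\<in>UNIV. Q y (x, z) * g x z) + (PX x - QX y x) / ln 2"
      proof (cases "QX y x = 0")
        case True then show ?thesis using PXnn[of x] ln2 by simp
      next
        case False
        then have "QX y x * (PX x / QX y x - 1) = PX x - QX y x" by (simp add: field_simps)
        then show ?thesis by simp
      qed
      finally show "(\<Sum>z\<in>UNIV. (if Q y (x, z) = 0 then 0 else Q y (x, z) * log 2 (Q y (x, z) / (QX y x * c y z))))
          \<le> (\<Sum>z\<in>UNIV. Q y (x, z) * g x z) + (PX x - QX y x) / ln 2" .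
    qed
    also have "\<dots> = (\<Sum>x\<in>UNIV. \<Sum>z\<in>UNIV. Q y (x, z) * g x z) + (\<Sum>x\<in>UNIV. (PX x - QX y x) / ln 2)"
      by (simp add: sum.distrib)
    finally show ?thesis .
  qed
  have K1: "(\<Sum>y\<in>UNIV. PY p y * c y z) = PZ p z" for z
  proof -
    have "PY p y * c y z = PYZ p y z" for y
    proof (cases "PY p y = 0")
      case True then show ?thesis using PYZ_le_Y[of p y z] PYZ_nn[of p y z] by (simp add: c_def)
    qed (simp add: c_def)
    then show ?thesis by (simp add: PZ_PYZ)
  qed
  have K2: "(\<Sum>y\<in>UNIV. PY p y * Q y (x, z)) = PXZ p (x, z)" for x z
  proof -
    have "(\<Sum>y\<in>UNIV. PY p y * Q y (x, z)) = W x z * (\<Sum>y\<in>UNIV. PY p y * c y z)"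
      by (simp add: Qe sum_distrib_left mult_ac)
    also have "\<dots> = PXZ p (x, z)"
    proof (cases "PZ p z = 0")
      case True then show ?thesis using PXZ_le[of p x z] PXZ_nn[of p "(x,z)"] by (simp add: K1 W_def)
    qed (simp add: K1 W_def)
    finally show ?thesis .
  qed
  have K3: "(\<Sum>y\<in>UNIV. PY p y * QX y x) = PX x" for x
  proof -
    have "(\<Sum>y\<in>UNIV. PY p y * QX y x) = (\<Sum>y\<in>UNIV. \<Sum>z\<in>UNIV. PY p y * Q y (x, z))"
      by (simp add: QX_def Qe sum_distrib_left)
    also have "\<dots> = (\<Sum>z\<in>UNIV. \<Sum>y\<in>UNIV. PY p y * Q y (x, z))" by (rule sum.swap)
    also have "\<dots> = PX x" by (simp add: K2 PX_def)
    finally show ?thesis .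
  qed
  have "unique_info p = (\<Sum>y\<in>UNIV. PY p y * mutual_info (Q y))"
    unfolding unique_info_def Q_def
  proof (rule sum.mono_neutral_left)
    show "\<forall>i\<in>UNIV - {y. 0 < PY p y}. PY p i * mutual_info (\<lambda>(x, z). \<Sum>y'\<in>UNIV. tilt p i (x, y', z)) = 0"
      using PY_nn by (auto simp: less_le)
  qed auto
  also have "\<dots> \<le> (\<Sum>y\<in>UNIV. PY p y * ((\<Sum>x\<in>UNIV. \<Sum>z\<in>UNIV. Q y (x, z) * g x z) + (\<Sum>x\<in>UNIV. (PX x - QX y x) / ln 2)))"
    by (rule sum_mono, rule mult_left_mono[OF B PY_nn])
  also have "\<dots> = (\<Sum>y\<in>UNIV. PY p y * (\<Sum>x\<in>UNIV. \<Sum>z\<in>UNIV. Q y (x, z) * g x z))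
      + (\<Sum>y\<in>UNIV. PY p y * (\<Sum>x\<in>UNIV. (PX x - QX y x) / ln 2))"
    by (simp add: distrib_left sum.distrib)
  also have "(\<Sum>y\<in>UNIV. PY p y * (\<Sum>x\<in>UNIV. \<Sum>z\<in>UNIV. Q y (x, z) * g x z))
      = (\<Sum>x\<in>UNIV. \<Sum>z\<in>UNIV. PXZ p (x, z) * g x z)"
  proof -
    have "(\<Sum>y\<in>UNIV. PY p y * (\<Sum>x\<in>UNIV. \<Sum>z\<in>UNIV. Q y (x, z) * g x z))
        = (\<Sum>y\<in>UNIV. \<Sum>x\<in>UNIV. \<Sum>z\<in>UNIV. PY p y * Q y (x, z) * g x z)"
      by (simp add: sum_distrib_left mult.assoc)
    also have "\<dots> = (\<Sum>x\<in>UNIV. \<Sum>y\<in>UNIV. \<Sum>z\<in>UNIV. PY p y * Q y (x, z) * g x z)"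
      by (rule sum.swap)
    also have "\<dots> = (\<Sum>x\<in>UNIV. \<Sum>z\<in>UNIV. \<Sum>y\<in>UNIV. PY p y * Q y (x, z) * g x z)"
      by (rule sum.cong[OF refl], rule sum.swap)
    also have "\<dots> = (\<Sum>x\<in>UNIV. \<Sum>z\<in>UNIV. (\<Sum>y\<in>UNIV. PY p y * Q y (x, z)) * g x z)"
      by (simp add: sum_distrib_right)
    also have "\<dots> = (\<Sum>x\<in>UNIV. \<Sum>z\<in>UNIV. PXZ p (x, z) * g x z)"
      by (simp add: K2)
    finally show ?thesis .
  qed
  also have "(\<Sum>y\<in>UNIV. PY p y * (\<Sum>x\<in>UNIV. (PX x - QX y x) / ln 2)) = 0"
  proof -
    have "(\<Sum>y\<in>UNIV. PY p y * (\<Sum>x\<in>UNIV. (PX x - QX y x) / ln 2))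
        = (\<Sum>y\<in>UNIV. \<Sum>x\<in>UNIV. (PY p y * PX x - PY p y * QX y x) / ln 2)"
      by (simp add: sum_distrib_left right_diff_distrib)
    also have "\<dots> = (\<Sum>x\<in>UNIV. \<Sum>y\<in>UNIV. (PY p y * PX x - PY p y * QX y x) / ln 2)"
      by (rule sum.swap)
    also have "\<dots> = (\<Sum>x\<in>UNIV. ((\<Sum>y\<in>UNIV. PY p y) * PX x - (\<Sum>y\<in>UNIV. PY p y * QX y x)) / ln 2)"
      by (simp add: sum_divide_distrib[symmetric] sum_subtractf sum_distrib_right)
    also have "\<dots> = 0" by (simp add: K3 tot)
    finally show ?thesis .
  qed
  also have "(\<Sum>x\<in>UNIV. \<Sum>z\<in>UNIV. PXZ p (x, z) * g x z) + 0 = mutual_info (PXZ p)"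
  proof -
    have "PXZ p (x, z) * g x z = (if PXZ p (x, z) = 0 then 0 else PXZ p (x, z) *
        log 2 (PXZ p (x, z) / ((\<Sum>b'\<in>UNIV. PXZ p (x, b')) * (\<Sum>a'\<in>UNIV. PXZ p (a', z)))))" for x z
    proof (cases "PXZ p (x, z) = 0")
      case False
      have "PXZ p (x, z) / ((\<Sum>b'\<in>UNIV. PXZ p (x, b')) * (\<Sum>a'\<in>UNIV. PXZ p (a', z))) = W x z / PX x"
        by (simp add: W_def PX_def PZ_PXZ[symmetric] field_simps)
      then show ?thesis using False by (simp add: g_def)
    qed (simp add: g_def)
    then show ?thesis unfolding mutual_info_def by simp
  qed
  finally show ?thesis .
qed
end
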